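(* Let $v,w,\Delta$ be nonnegative integers with $w\ge1$ and $v+\Delta\le w$. Then for every $0<\lambda\le1$, \[ \varPhi_{v,\Delta}(\lambda)\le\left(\frac{(1+\lambda)^w}{1+\lambda^w}\right)^{v/w}. \]
   Context: For nonnegative integers $v,\Delta$ and $0<\lambda\le 1$, the local factor is \[ \varPhi_{v,\Delta}(\lambda)=\frac{\sum_{t=0}^v\binom vt\lambda^{\min\{t,\,\Delta+v-t\}}}{1+\lambda^{\Delta}}. \] *)

theory Defs
  imports Complex_Main
begin

definition Phi :: "nat \<Rightarrow> nat \<Rightarrow> real \<Rightarrow> real" where
  "Phi v D lam =
     (\<Sum>t = 0..v. real (v choose t) * lam ^ (min t (D + v - t))) / (1 + lam ^ D)"

end

theory Submission
  imports Defs
begin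

lemma term_bound:
  fixes lam :: real
  assumes "t \<le> v" "v + D \<le> w" "0 < lam" "lam \<le> 1"
  shows "lam ^ (min t (D + v - t)) * (1 + lam ^ w) \<le> lam ^ t + lam ^ (D + v - t)"
proof -
  define a where "a = min t (D + v - t)"
  define b where "b = max t (D + v - t)"
  have ab: "lam ^ t + lam ^ (D + v - t) = lam ^ a + lam ^ b"
    unfolding a_def b_def by (cases "t \<le> D + v - t") (auto simp: min_def max_def)
  have "b \<le> a + w" unfolding a_def b_def using assms by auto
  hence "lam ^ (a + w) \<le> lam ^ b"
    using assms by (intro power_decreasing) auto
  hence "lam ^ a * (1 + lam ^ w) \<le> lam ^ a + lam ^ b"
    by (simp add: algebra_simps power_add)
  thus ?thesis using ab a_def by simp
qed

theorem lemma10: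
  fixes v w D :: nat and lam :: real
  assumes "w \<ge> 1" and "v + D \<le> w" and "0 < lam" and "lam \<le> 1"
  shows "Phi v D lam \<le> ((1 + lam) ^ w / (1 + lam ^ w)) powr (real v / real w)"
proof -
  have b1: "(\<Sum>t = 0..v. real (v choose t) * lam ^ t) = (1 + lam) ^ v"
    using binomial_ring[of lam 1 v] by (simp add: add.commute atLeast0AtMost)
  have b2: "(\<Sum>t = 0..v. real (v choose t) * lam ^ (D + v - t)) = lam ^ D * (1 + lam) ^ v"
  proof -
    have "(\<Sum>t = 0..v. real (v choose t) * lam ^ (D + v - t))
        = (\<Sum>t = 0..v. lam ^ D * (real (v choose t) * lam ^ (v - t)))"
      by (intro sum.cong refl) (auto simp: power_add[symmetric] algebra_simps)
    also have "\<dots> = lam ^ D * (\<Sum>t = 0..v. real (v choose t) * 1 ^ t * lam ^ (v - t))"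
      by (simp add: sum_distrib_left)
    also have "\<dots> = lam ^ D * (1 + lam) ^ v"
      using binomial_ring[of 1 lam v] by (simp add: atLeast0AtMost)
    finally show ?thesis .
  qed
  define N where "N = (\<Sum>t = 0..v. real (v choose t) * lam ^ (min t (D + v - t)))"
  have "N * (1 + lam ^ w) = (\<Sum>t = 0..v. real (v choose t) * (lam ^ (min t (D + v - t)) * (1 + lam ^ w)))"
    unfolding N_def by (simp add: sum_distrib_right sum_distrib_left sum.distrib algebra_simps)
  also have "\<dots> \<le> (\<Sum>t = 0..v. real (v choose t) * (lam ^ t + lam ^ (D + v - t)))"
    using assms by (intro sum_mono mult_left_mono term_bound) auto
  also have "\<dots> = (1 + lam) ^ v * (1 + lam ^ D)"
    using b1 b2 by (simp add: algebra_simps sum.distrib)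
  finally have Nle: "N * (1 + lam ^ w) \<le> (1 + lam) ^ v * (1 + lam ^ D)" .
  have pw: "0 < 1 + lam ^ w" "0 < 1 + lam ^ D" using assms by (auto intro: add_pos_nonneg)
  have Phi_le: "Phi v D lam \<le> (1 + lam) ^ v / (1 + lam ^ w)"
    unfolding Phi_def N_def[symmetric] using Nle pw
    by (simp add: divide_simps mult.commute)
  have e1: "((1 + lam) ^ w) powr (real v / real w) = (1 + lam) ^ v"
  proof -
    have "((1 + lam) ^ w) powr (real v / real w) = ((1 + lam) powr real w) powr (real v / real w)"
      using assms by (simp add: powr_realpow)
    also have "\<dots> = (1 + lam) powr real v"
      using assms by (simp add: powr_powr)
    also have "\<dots> = (1 + lam) ^ v" using assms by (simp add: powr_realpow)
    finally show ?thesis .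
  qed
  have e2: "(1 + lam ^ w) powr (real v / real w) \<le> 1 + lam ^ w"
  proof -
    have "(1 + lam ^ w) powr (real v / real w) \<le> (1 + lam ^ w) powr 1"
      using assms by (intro powr_mono) (auto simp: divide_simps)
    thus ?thesis using pw by simp
  qed
  have e2pos: "0 < (1 + lam ^ w) powr (real v / real w)" using pw by simp
  have "((1 + lam) ^ w / (1 + lam ^ w)) powr (real v / real w)
      = (1 + lam) ^ v / (1 + lam ^ w) powr (real v / real w)"
    using assms pw by (simp add: powr_divide e1)
  also have "\<dots> \<ge> (1 + lam) ^ v / (1 + lam ^ w)"
    using e2 e2pos pw assms by (intro divide_left_mono) (auto intro: mult_pos_pos)
  finally show ?thesis using Phi_le by linarith
qed

end
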